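(* Let $\mathcal{E}[t_{\mathcal{E}}]$ be a locally convex space and let $\{\xi_n\}\subset\mathcal{E}$ be a Schauder basis of $\mathcal{E}[t_{\mathcal{E}}]$. Assume that there exists a one-to-one continuous linear map $T$ from $\mathcal{E}[t_{\mathcal{E}}]$ into some Hilbert space $\mathcal{K}[\|\cdot\|]$ such that $\{T\xi_n\}$ is an orthonormal basis of $\mathcal{K}$. Then there exists an inner product $\langle\cdot,\cdot\rangle_+$ on $\mathcal{E}\times\mathcal{E}$ such that the topology induced on $\mathcal{E}$ by the corresponding norm $\|\cdot\|_+$ is coarser than $t_{\mathcal{E}}$ and $\{\xi_n\}$ is an orthonormal basis with respect to $\langle\cdot,\cdot\rangle_+$.
   Context: A sequence $\{\xi_n\}$ in a locally convex space $\mathcal{E}[t_{\mathcal{E}}]$ is a topological basis if every $\phi\in\mathcal{E}$ can be written uniquely as $\phi=\sum_{n=1}^\infty c_n\xi_n$ with the series converging in $\mathcal{E}[t_{\mathcal{E}}]$; it is a Schauder basis if, in addition, the coefficient functionals $\phi\mapsto c_n(\phi)$ are $t_{\mathcal{E}}$-continuous. *)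

theory Defs
  imports "HOL-Analysis.Analysis"
begin

text \<open>Complex vector spaces are modelled as an additive abelian group type
  together with an explicit complex scalar multiplication sm.\<close>

definition cvs :: "(complex \<Rightarrow> 'a::ab_group_add \<Rightarrow> 'a) \<Rightarrow> bool" where
  "cvs sm \<longleftrightarrow>
     (\<forall>c x y. sm c (x + y) = sm c x + sm c y) \<and>
     (\<forall>a b x. sm (a + b) x = sm a x + sm b x) \<and>
     (\<forall>a b x. sm a (sm b x) = sm (a * b) x) \<and>
     (\<forall>x. sm 1 x = x)"

definition clinear_map ::
  "(complex \<Rightarrow> 'a::ab_group_add \<Rightarrow> 'a) \<Rightarrow> (complex \<Rightarrow> 'b::ab_group_add \<Rightarrow> 'b) \<Rightarrow> ('a \<Rightarrow> 'b) \<Rightarrow> bool" where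
  "clinear_map smA smB T \<longleftrightarrow>
     (\<forall>x y. T (x + y) = T x + T y) \<and> (\<forall>c x. T (smA c x) = smB c (T x))"

definition cconvex :: "(complex \<Rightarrow> 'a::ab_group_add \<Rightarrow> 'a) \<Rightarrow> 'a set \<Rightarrow> bool" where
  "cconvex sm V \<longleftrightarrow> (\<forall>x\<in>V. \<forall>y\<in>V. \<forall>u::real. 0 \<le> u \<and> u \<le> 1 \<longrightarrow>
      sm (complex_of_real u) x + sm (complex_of_real (1 - u)) y \<in> V)"

definition locally_convex_space ::
  "(complex \<Rightarrow> 'a::ab_group_add \<Rightarrow> 'a) \<Rightarrow> 'a topology \<Rightarrow> bool" where
  "locally_convex_space sm \<tau> \<longleftrightarrow>
     cvs sm \<and> topspace \<tau> = UNIV \<and>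
     continuous_map (prod_topology \<tau> \<tau>) \<tau> (\<lambda>(x, y). x + y) \<and>
     continuous_map (prod_topology (euclidean :: complex topology) \<tau>) \<tau> (\<lambda>(c, x). sm c x) \<and>
     (\<forall>U. openin \<tau> U \<and> 0 \<in> U \<longrightarrow> (\<exists>V. openin \<tau> V \<and> 0 \<in> V \<and> cconvex sm V \<and> V \<subseteq> U))"

definition inner_product ::
  "(complex \<Rightarrow> 'a::ab_group_add \<Rightarrow> 'a) \<Rightarrow> ('a \<Rightarrow> 'a \<Rightarrow> complex) \<Rightarrow> bool" where
  "inner_product sm ip \<longleftrightarrow>
     (\<forall>x y z. ip (x + y) z = ip x z + ip y z) \<and>
     (\<forall>c x y. ip (sm c x) y = c * ip x y) \<and>
     (\<forall>x y. ip y x = cnj (ip x y)) \<and>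
     (\<forall>x. x \<noteq> 0 \<longrightarrow> Re (ip x x) > 0)"

definition ipnorm :: "('a \<Rightarrow> 'a \<Rightarrow> complex) \<Rightarrow> 'a \<Rightarrow> real" where
  "ipnorm ip x = sqrt (Re (ip x x))"

definition norm_open :: "('a::ab_group_add \<Rightarrow> real) \<Rightarrow> 'a set \<Rightarrow> bool" where
  "norm_open N U \<longleftrightarrow> (\<forall>x\<in>U. \<exists>e>0. \<forall>y. N (y - x) < e \<longrightarrow> y \<in> U)"

definition norm_tendsto :: "('a::ab_group_add \<Rightarrow> real) \<Rightarrow> (nat \<Rightarrow> 'a) \<Rightarrow> 'a \<Rightarrow> bool" where
  "norm_tendsto N f l \<longleftrightarrow> (\<lambda>n. N (f n - l)) \<longlonglongrightarrow> 0"

definition norm_Cauchy :: "('a::ab_group_add \<Rightarrow> real) \<Rightarrow> (nat \<Rightarrow> 'a) \<Rightarrow> bool" where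
  "norm_Cauchy N f \<longleftrightarrow> (\<forall>e>0. \<exists>M. \<forall>m\<ge>M. \<forall>n\<ge>M. N (f m - f n) < e)"

definition hilbert_space ::
  "(complex \<Rightarrow> 'a::ab_group_add \<Rightarrow> 'a) \<Rightarrow> ('a \<Rightarrow> 'a \<Rightarrow> complex) \<Rightarrow> bool" where
  "hilbert_space sm ip \<longleftrightarrow> cvs sm \<and> inner_product sm ip \<and>
     (\<forall>f. norm_Cauchy (ipnorm ip) f \<longrightarrow> (\<exists>l. norm_tendsto (ipnorm ip) f l))"

definition orthonormal_basis ::
  "(complex \<Rightarrow> 'a::ab_group_add \<Rightarrow> 'a) \<Rightarrow> ('a \<Rightarrow> 'a \<Rightarrow> complex) \<Rightarrow> (nat \<Rightarrow> 'a) \<Rightarrow> bool" where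
  "orthonormal_basis sm ip e \<longleftrightarrow>
     (\<forall>m n. ip (e m) (e n) = (if m = n then 1 else 0)) \<and>
     (\<forall>x. norm_tendsto (ipnorm ip) (\<lambda>n. \<Sum>k<n. sm (ip x (e k)) (e k)) x)"

definition topological_basis_seq ::
  "(complex \<Rightarrow> 'a::ab_group_add \<Rightarrow> 'a) \<Rightarrow> 'a topology \<Rightarrow> (nat \<Rightarrow> 'a) \<Rightarrow> bool" where
  "topological_basis_seq sm \<tau> \<xi> \<longleftrightarrow>
     (\<forall>\<phi>. \<exists>!c::nat \<Rightarrow> complex. limitin \<tau> (\<lambda>n. \<Sum>k<n. sm (c k) (\<xi> k)) \<phi> sequentially)"

definition basis_coeff ::
  "(complex \<Rightarrow> 'a::ab_group_add \<Rightarrow> 'a) \<Rightarrow> 'a topology \<Rightarrow> (nat \<Rightarrow> 'a) \<Rightarrow> 'a \<Rightarrow> nat \<Rightarrow> complex" where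
  "basis_coeff sm \<tau> \<xi> \<phi> =
     (THE c. limitin \<tau> (\<lambda>n. \<Sum>k<n. sm (c k) (\<xi> k)) \<phi> sequentially)"

definition schauder_basis ::
  "(complex \<Rightarrow> 'a::ab_group_add \<Rightarrow> 'a) \<Rightarrow> 'a topology \<Rightarrow> (nat \<Rightarrow> 'a) \<Rightarrow> bool" where
  "schauder_basis sm \<tau> \<xi> \<longleftrightarrow> topological_basis_seq sm \<tau> \<xi> \<and>
     (\<forall>n. continuous_map \<tau> (euclidean :: complex topology) (\<lambda>\<phi>. basis_coeff sm \<tau> \<xi> \<phi> n))"

end

theory Submission
  imports Defs
begin

lemma ip_cnj: "inner_product sm ip \<Longrightarrow> ip y x = cnj (ip x y)"
  unfolding inner_product_def by blast
lemma ip_add_l: "inner_product sm ip \<Longrightarrow> ip (x + y) z = ip x z + ip y z"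
  unfolding inner_product_def by blast
lemma ip_scale_l: "inner_product sm ip \<Longrightarrow> ip (sm c x) y = c * ip x y"
  unfolding inner_product_def by blast
lemma ip_diff_l: "inner_product sm ip \<Longrightarrow> ip (x - y) z = ip x z - ip y z"
proof -
  assume h: "inner_product sm ip"
  have "ip x z = ip ((x - y) + y) z" by simp
  also have "\<dots> = ip (x - y) z + ip y z" using ip_add_l[OF h] .
  finally show ?thesis by simp
qed
lemma ip_add_r: "inner_product sm ip \<Longrightarrow> ip z (x + y) = ip z x + ip z y"
proof -
  assume h: "inner_product sm ip"
  have "ip z (x + y) = cnj (ip (x+y) z)" by (rule ip_cnj[OF h])
  also have "\<dots> = cnj (ip x z) + cnj (ip y z)" by (simp add: ip_add_l[OF h])
  finally show ?thesis by (simp add: ip_cnj[OF h, of x z] ip_cnj[OF h, of y z])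
qed
lemma ip_diff_r: "inner_product sm ip \<Longrightarrow> ip z (x - y) = ip z x - ip z y"
proof -
  assume h: "inner_product sm ip"
  have "ip z (x - y) = cnj (ip (x-y) z)" by (rule ip_cnj[OF h])
  also have "\<dots> = cnj (ip x z) - cnj (ip y z)" by (simp add: ip_diff_l[OF h])
  finally show ?thesis by (simp add: ip_cnj[OF h, of x z] ip_cnj[OF h, of y z])
qed
lemma ip_scale_r: "inner_product sm ip \<Longrightarrow> ip x (sm c y) = cnj c * ip x y"
proof -
  assume h: "inner_product sm ip"
  have "ip x (sm c y) = cnj (ip (sm c y) x)" by (rule ip_cnj[OF h])
  also have "\<dots> = cnj c * cnj (ip y x)" by (simp add: ip_scale_l[OF h])
  finally show ?thesis by (simp add: ip_cnj[OF h, of y x])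
qed
lemma ip_zero_l: "inner_product sm ip \<Longrightarrow> ip 0 z = 0"
  using ip_diff_l[of sm ip 0 0 z] by simp
lemma ip_zero_r: "inner_product sm ip \<Longrightarrow> ip z 0 = 0"
  using ip_diff_r[of sm ip z 0 0] by simp
lemma ip_self_Im: "inner_product sm ip \<Longrightarrow> Im (ip x x) = 0"
proof -
  assume h: "inner_product sm ip"
  have "Im (ip x x) = Im (cnj (ip x x))" using ip_cnj[OF h, of x x] by simp
  then show ?thesis by simp
qed
lemma ip_self_nonneg: "inner_product sm ip \<Longrightarrow> 0 \<le> Re (ip x x)"
proof -
  assume h: "inner_product sm ip"
  show ?thesis
  proof (cases "x = 0")
    case True then show ?thesis by (simp add: ip_zero_l[OF h])
  next
    case False then have "Re (ip x x) > 0" using h unfolding inner_product_def by blast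
    then show ?thesis by simp
  qed
qed

lemma ip_CS:
  assumes h: "inner_product sm ip"
  shows "(cmod (ip a b))^2 \<le> Re (ip a a) * Re (ip b b)"
proof (cases "b = 0")
  case True then show ?thesis by (simp add: ip_zero_r[OF h])
next
  case False
  define \<beta> where "\<beta> = Re (ip b b)"
  have bpos: "\<beta> > 0" using False h unfolding \<beta>_def inner_product_def by blast
  have bb: "ip b b = complex_of_real \<beta>" unfolding \<beta>_def using ip_self_Im[OF h, of b]
    by (simp add: complex_eq_iff)
  define p where "p = ip a b"
  define t where "t = p / complex_of_real \<beta>"
  have ba: "ip b a = cnj p" unfolding p_def using ip_cnj[OF h] .
  let ?u = "sm t b"
  have e: "ip (a - ?u) (a - ?u) = ip a a - cnj t * p - t * cnj p + t * cnj t * complex_of_real \<beta>"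
  proof -
    have 1: "ip (a - ?u) (a - ?u) = ip a a - ip a ?u - (ip ?u a - ip ?u ?u)"
      by (simp add: ip_diff_l[OF h] ip_diff_r[OF h])
    have 2: "ip a ?u = cnj t * p" by (simp add: ip_scale_r[OF h] p_def)
    have 3: "ip ?u a = t * cnj p" by (simp add: ip_scale_l[OF h] ba)
    have 4: "ip ?u ?u = t * cnj t * complex_of_real \<beta>"
      by (simp add: ip_scale_l[OF h] ip_scale_r[OF h] bb)
    show ?thesis unfolding 1 2 3 4 by simp
  qed
  have pp: "cnj p * p = complex_of_real ((cmod p)^2)"
    by (metis complex_norm_square mult.commute)
  have ct: "cnj t = cnj p / complex_of_real \<beta>" by (simp add: t_def)
  have q1: "cnj t * p = complex_of_real ((cmod p)^2 / \<beta>)"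
    unfolding ct using pp by simp
  have q2: "t * cnj p = complex_of_real ((cmod p)^2 / \<beta>)"
    unfolding t_def using pp by (simp add: mult.commute)
  have q3: "t * cnj t * complex_of_real \<beta> = complex_of_real ((cmod p)^2 / \<beta>)"
    unfolding t_def ct using pp bpos by (simp add: mult.commute)
  have "Re (cnj t * p) = (cmod p)^2 / \<beta>" "Re (t * cnj p) = (cmod p)^2 / \<beta>"
    "Re (t * cnj t * complex_of_real \<beta>) = (cmod p)^2 / \<beta>"
    using q1 q2 q3 by simp_all
  then have "Re (ip (a - sm t b) (a - sm t b)) = Re (ip a a) - (cmod p)^2 / \<beta>"
    using e by simp
  with ip_self_nonneg[OF h, of "a - ?u"] have "(cmod p)^2 / \<beta> \<le> Re (ip a a)" by linarith
  then show ?thesis using bpos unfolding p_def \<beta>_def by (simp add: field_simps)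
qed

lemma ipnorm_triangle:
  assumes h: "inner_product sm ip"
  shows "ipnorm ip (a + b) \<le> ipnorm ip a + ipnorm ip b"
proof -
  have na: "0 \<le> Re (ip a a)" and nb: "0 \<le> Re (ip b b)" using ip_self_nonneg[OF h] by auto
  have "Re (ip a b) \<le> cmod (ip a b)" by (rule complex_Re_le_cmod)
  also have "\<dots> \<le> sqrt (Re (ip a a) * Re (ip b b))"
    using ip_CS[OF h, of a b] by (rule real_le_rsqrt)
  finally have c: "Re (ip a b) \<le> ipnorm ip a * ipnorm ip b"
    by (simp add: ipnorm_def real_sqrt_mult)
  have sa: "(ipnorm ip a)^2 = Re (ip a a)" using na by (simp add: ipnorm_def)
  have sb: "(ipnorm ip b)^2 = Re (ip b b)" using nb by (simp add: ipnorm_def)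
  have "Re (ip (a+b) (a+b)) = Re (ip a a) + Re (ip b b) + Re (ip a b) + Re (ip b a)"
    by (simp add: ip_add_l[OF h] ip_add_r[OF h])
  also have "Re (ip b a) = Re (ip a b)" using ip_cnj[OF h, of a b] by simp
  finally have "Re (ip (a+b) (a+b)) \<le> (ipnorm ip a + ipnorm ip b)^2"
    using c sa sb by (simp add: power2_eq_square algebra_simps)
  then have "sqrt (Re (ip (a+b) (a+b))) \<le> sqrt ((ipnorm ip a + ipnorm ip b)^2)"
    by (rule real_sqrt_le_mono)
  also have "\<dots> = ipnorm ip a + ipnorm ip b" using na nb by (simp add: ipnorm_def)
  finally show ?thesis by (simp add: ipnorm_def)
qed

lemma T_zero: "clinear_map sm smK T \<Longrightarrow> T 0 = 0"
  unfolding clinear_map_def by (metis add.right_neutral add_left_cancel)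
lemma T_diff: "clinear_map sm smK T \<Longrightarrow> T (x - y) = T x - T y"
  unfolding clinear_map_def by (metis add_diff_cancel eq_diff_eq)
lemma T_sum: "clinear_map sm smK T \<Longrightarrow> T (\<Sum>k<(n::nat). f k) = (\<Sum>k<n. T (f k))"
  by (induction n) (auto simp: T_zero clinear_map_def)

theorem proposition2p5:
  fixes sm :: "complex \<Rightarrow> 'a::ab_group_add \<Rightarrow> 'a"
    and \<tau> :: "'a topology"
    and \<xi> :: "nat \<Rightarrow> 'a"
    and smK :: "complex \<Rightarrow> 'b::ab_group_add \<Rightarrow> 'b"
    and ipK :: "'b \<Rightarrow> 'b \<Rightarrow> complex"
    and T :: "'a \<Rightarrow> 'b"
  assumes "locally_convex_space sm \<tau>"
    and "schauder_basis sm \<tau> \<xi>"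
    and "hilbert_space smK ipK"
    and "clinear_map sm smK T"
    and "inj T"
    and "\<forall>U. norm_open (ipnorm ipK) U \<longrightarrow> openin \<tau> (T -` U)"
    and "orthonormal_basis smK ipK (\<lambda>n. T (\<xi> n))"
  shows "\<exists>ip :: 'a \<Rightarrow> 'a \<Rightarrow> complex.
           inner_product sm ip \<and>
           (\<forall>U. norm_open (ipnorm ip) U \<longrightarrow> openin \<tau> U) \<and>
           orthonormal_basis sm ip \<xi>"
proof -
  have hK: "inner_product smK ipK" using assms(3) by (simp add: hilbert_space_def)
  have L: "clinear_map sm smK T" by fact
  define ip where "ip = (\<lambda>x y. ipK (T x) (T y))"
  have N: "ipnorm ip z = ipnorm ipK (T z)" for z by (simp add: ipnorm_def ip_def)
  have I: "inner_product sm ip"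
    unfolding inner_product_def ip_def
  proof (intro conjI allI impI)
    fix x y z c
    show "ipK (T (x + y)) (T z) = ipK (T x) (T z) + ipK (T y) (T z)"
      using L hK by (simp add: clinear_map_def ip_add_l)
    show "ipK (T (sm c x)) (T y) = c * ipK (T x) (T y)"
      using L hK by (simp add: clinear_map_def ip_scale_l)
    show "ipK (T y) (T x) = cnj (ipK (T x) (T y))" using ip_cnj[OF hK] .
  next
    fix x :: 'a assume "x \<noteq> 0"
    then have "T x \<noteq> 0" using assms(5) T_zero[OF L] by (metis injD)
    then show "0 < Re (ipK (T x) (T x))" using hK unfolding inner_product_def by blast
  qed
  have O: "openin \<tau> U" if U: "norm_open (ipnorm ip) U" for U
  proof -
    let ?N = "ipnorm ipK"
    define V where "V = {w. \<exists>x\<in>U. \<exists>e>0. (\<forall>y. ipnorm ip (y - x) < e \<longrightarrow> y \<in> U) \<and> ?N (w - T x) < e}"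
    have "norm_open ?N V"
      unfolding norm_open_def
    proof
      fix w assume "w \<in> V"
      then obtain x e where x: "x \<in> U" "e > 0" "\<forall>y. ipnorm ip (y - x) < e \<longrightarrow> y \<in> U"
        and w: "?N (w - T x) < e" unfolding V_def by blast
      show "\<exists>d>0. \<forall>w'. ?N (w' - w) < d \<longrightarrow> w' \<in> V"
      proof (intro exI[of _ "e - ?N (w - T x)"] conjI allI impI)
        show "0 < e - ?N (w - T x)" using w by simp
        fix w' assume "?N (w' - w) < e - ?N (w - T x)"
        moreover have "?N (w' - T x) \<le> ?N (w' - w) + ?N (w - T x)"
          using ipnorm_triangle[OF hK, of "w' - w" "w - T x"] by simp
        ultimately have "?N (w' - T x) < e" by simp
        then show "w' \<in> V" unfolding V_def using x by blast
      qed
    qed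
    then have "openin \<tau> (T -` V)" using assms(6) by blast
    moreover have "T -` V = U"
    proof
      show "T -` V \<subseteq> U"
      proof
        fix y assume "y \<in> T -` V"
        then obtain x e where x: "x \<in> U" "e > 0" "\<forall>y. ipnorm ip (y - x) < e \<longrightarrow> y \<in> U"
          and w: "?N (T y - T x) < e" unfolding V_def by blast
        have "ipnorm ip (y - x) < e" using w by (simp add: N T_diff[OF L])
        then show "y \<in> U" using x by blast
      qed
      show "U \<subseteq> T -` V"
      proof
        fix y assume y: "y \<in> U"
        then obtain e where e: "e > 0" "\<forall>z. ipnorm ip (z - y) < e \<longrightarrow> z \<in> U"
          using U unfolding norm_open_def by blast
        have "?N (T y - T y) = 0" by (simp add: ipnorm_def ip_zero_l[OF hK])
        then show "y \<in> T -` V" unfolding V_def using y e by force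
      qed
    qed
    ultimately show ?thesis by simp
  qed
  have B: "orthonormal_basis sm ip \<xi>"
    unfolding orthonormal_basis_def
  proof (intro conjI allI)
    fix m n show "ip (\<xi> m) (\<xi> n) = (if m = n then 1 else 0)"
      using assms(7) by (simp add: orthonormal_basis_def ip_def)
  next
    fix x
    have eq: "ipnorm ip ((\<Sum>k<n. sm (ip x (\<xi> k)) (\<xi> k)) - x)
       = ipnorm ipK ((\<Sum>k<n. smK (ipK (T x) (T (\<xi> k))) (T (\<xi> k))) - T x)" for n
      unfolding N T_diff[OF L] T_sum[OF L] using L by (simp add: clinear_map_def ip_def)
    show "norm_tendsto (ipnorm ip) (\<lambda>n. \<Sum>k<n. sm (ip x (\<xi> k)) (\<xi> k)) x"
      using assms(7) unfolding norm_tendsto_def orthonormal_basis_def eq by blast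
  qed
  show ?thesis using I O B by blast
qed

end
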